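(* Let $\mu$ be a cylindric partition on $\mathcal C_{k,n}$ and $t$ a nonnegative integer. There is a bijection between marble games of length $t$ with initial arrangement $\operatorname{Arr}(\mu)$ and semistandard cylindric tableaux with inner shape $\mu$ (and arbitrary outer shape) whose entries lie in $\{1,2,\dots,t\}$.
   Context: Fix integers $n>k\ge1$. A cylindric partition is a weakly decreasing integer sequence $(\lambda_m)_{m\in\mathbb Z}$ with $\lambda_m=\lambda_{m+k}+n-k$. A point $(x,y)\in\mathbb Z^2$ lies in $\lambda$ if $y\le\lambda_x$. Boxes are classes of points modulo translation by multiples of $(-k,n-k)$; $\pi$ the projection. $\mu\subseteq\lambda$ means $\mu_m\le\lambda_m$ for all $m$. A semistandard cylindric tableau of shape $\lambda/\mu$ (with $\mu\subseteq\lambda$) is a map $R$ from the boxes in $\lambda$ but not $\mu$ to a totally ordered set with $R(\pi(x,y_1))\le R(\pi(x,y_2))$ whenever $(x,y_1),(x,y_2)$ lie in $\lambda$ but not $\mu$ and $y_1<y_2$, and $R(\pi(x_1,y))<R(\pi(x_2,y))$ whenever $(x_1,y),(x_2,y)$ lie in $\lambda$ but not $\mu$ and $x_1<x_2$; $\mu$ is its inner shape. Marble games: there are $k$ people $p_0,\dots,p_{k-1}$ in a circle, indices taken mod $k$, with $p_{i+1}$ the clockwise neighbour of $p_i$. For a cylindric partition $\alpha$, the arrangement $\operatorname{Arr}(\alpha)$ gives $p_i$ exactly $\alpha_{i-1}-\alpha_i$ marbles (a total of $n-k$ marbles). A turn is a tuple $(a_0,\dots,a_{k-1})$ of nonnegative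 integers, applied to an arrangement, in which simultaneously each $p_i$ passes $a_i$ marbles to $p_{i+1}$, where $a_i$ is at most the number of marbles $p_i$ has before the turn. A marble game of length $t$ is an initial arrangement of the $n-k$ marbles among the $k$ people together with a sequence of $t$ successive (valid) turns. *)

theory Defs
  imports Main
begin

definition cylindric_partition :: "nat \<Rightarrow> nat \<Rightarrow> (int \<Rightarrow> int) \<Rightarrow> bool" where
  "cylindric_partition k n lam \<longleftrightarrow>
     (\<forall>m. lam (m + 1) \<le> lam m) \<and> (\<forall>m. lam m = lam (m + int k) + (int n - int k))"

definition in_shape :: "(int \<Rightarrow> int) \<Rightarrow> int \<times> int \<Rightarrow> bool" where
  "in_shape lam p \<longleftrightarrow> snd p \<le> lam (fst p)"

definition cyl_box :: "nat \<Rightarrow> nat \<Rightarrow> int \<times> int \<Rightarrow> (int \<times> int) set" where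
  "cyl_box k n p = {(fst p - j * int k, snd p + j * (int n - int k)) | j. True}"

definition skew_points :: "(int \<Rightarrow> int) \<Rightarrow> (int \<Rightarrow> int) \<Rightarrow> (int \<times> int) set" where
  "skew_points lam mu = {p. in_shape lam p \<and> \<not> in_shape mu p}"

definition skew_boxes :: "nat \<Rightarrow> nat \<Rightarrow> (int \<Rightarrow> int) \<Rightarrow> (int \<Rightarrow> int) \<Rightarrow> (int \<times> int) set set" where
  "skew_boxes k n lam mu = cyl_box k n ` skew_points lam mu"

(* A tableau is the pair (lam, R), where R is a map on
   boxes, set to 0 outside the boxes of lam/mu (so that equality of tableaux is extensional). *)
definition cyl_tableaux :: "nat \<Rightarrow> nat \<Rightarrow> nat \<Rightarrow> (int \<Rightarrow> int)
    \<Rightarrow> ((int \<Rightarrow> int) \<times> ((int \<times> int) set \<Rightarrow> nat)) set" where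
  "cyl_tableaux k n t mu = {(lam, R).
     cylindric_partition k n lam \<and> (\<forall>m. mu m \<le> lam m) \<and>
     (\<forall>B. B \<notin> skew_boxes k n lam mu \<longrightarrow> R B = 0) \<and>
     (\<forall>B\<in>skew_boxes k n lam mu. R B \<in> {1..t}) \<and>
     (\<forall>x y1 y2. (x, y1) \<in> skew_points lam mu \<and> (x, y2) \<in> skew_points lam mu \<and> y1 < y2
        \<longrightarrow> R (cyl_box k n (x, y1)) \<le> R (cyl_box k n (x, y2))) \<and>
     (\<forall>x1 x2 y. (x1, y) \<in> skew_points lam mu \<and> (x2, y) \<in> skew_points lam mu \<and> x1 < x2
        \<longrightarrow> R (cyl_box k n (x1, y)) < R (cyl_box k n (x2, y)))}"

(* Arrangements: person p_i (0 \<le> i < k) holds A i marbles; A i = 0 for i \<ge> k. *)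
definition Arr :: "nat \<Rightarrow> (int \<Rightarrow> int) \<Rightarrow> nat \<Rightarrow> nat" where
  "Arr k alpha i = (if i < k then nat (alpha (int i - 1) - alpha (int i)) else 0)"

(* apply a turn a: p_i passes a i marbles to p_{i+1} (indices mod k) *)
definition turn_step :: "nat \<Rightarrow> (nat \<Rightarrow> nat) \<Rightarrow> (nat \<Rightarrow> nat) \<Rightarrow> nat \<Rightarrow> nat" where
  "turn_step k A a i = (if i < k then A i - a i + a ((i + k - 1) mod k) else 0)"

fun valid_turns :: "nat \<Rightarrow> (nat \<Rightarrow> nat) \<Rightarrow> (nat \<Rightarrow> nat) list \<Rightarrow> bool" where
  "valid_turns k A [] = True"
| "valid_turns k A (a # as) =
     ((\<forall>i<k. a i \<le> A i) \<and> (\<forall>i\<ge>k. a i = 0) \<and> valid_turns k (turn_step k A a) as)"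

definition marble_games :: "nat \<Rightarrow> (nat \<Rightarrow> nat) \<Rightarrow> nat
    \<Rightarrow> ((nat \<Rightarrow> nat) \<times> (nat \<Rightarrow> nat) list) set" where
  "marble_games k A0 t = {(A, ts). A = A0 \<and> length ts = t \<and> valid_turns k A ts}"

end

theory Submission
  imports Defs
begin

lemma cp_shift:
  assumes "cylindric_partition k n lam"
  shows "lam (x + j * int k) = lam x - j * (int n - int k)"
proof (induct j rule: int_induct[where k=0])
  case base then show ?case by simp
next
  case (step1 i)
  have "lam (x + i * int k) = lam (x + i * int k + int k) + (int n - int k)"
    using assms unfolding cylindric_partition_def by blast
  moreover have "x + i * int k + int k = x + (i+1) * int k" by (simp add: algebra_simps)
  ultimately show ?case using step1 by (simp add: algebra_simps)
next
  case (step2 i)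
  have "lam (x + (i - 1) * int k) = lam (x + (i - 1) * int k + int k) + (int n - int k)"
    using assms unfolding cylindric_partition_def by blast
  moreover have "x + (i - 1) * int k + int k = x + i * int k" by (simp add: algebra_simps)
  ultimately show ?case using step2 by (simp add: algebra_simps)
qed

lemma cp_mono:
  assumes "cylindric_partition k n lam" "x \<le> x'"
  shows "lam x' \<le> lam x"
proof -
  have "\<forall>x. lam (x + int d) \<le> lam x" for d
  proof (induct d)
    case 0 then show ?case by simp
  next
    case (Suc d)
    show ?case
    proof
      fix x
      have "lam (x + int d + 1) \<le> lam (x + int d)"
        using assms(1) unfolding cylindric_partition_def by blast
      moreover have "x + int d + 1 = x + int (Suc d)" by simp
      ultimately show "lam (x + int (Suc d)) \<le> lam x" using Suc by (metis order_trans)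
    qed
  qed
  moreover have "x' = x + int (nat (x' - x))" using assms(2) by simp
  ultimately show ?thesis by metis
qed

lemma in_box: "p \<in> cyl_box k n p"
  unfolding cyl_box_def by (cases p) (auto intro: exI[of _ 0])

lemma box_shape:
  assumes "cylindric_partition k n lam" "q \<in> cyl_box k n p"
  shows "in_shape lam q = in_shape lam p"
proof -
  obtain j where q: "q = (fst p - j * int k, snd p + j * (int n - int k))"
    using assms(2) unfolding cyl_box_def by auto
  have "lam (fst p + (-j) * int k) = lam (fst p) - (-j) * (int n - int k)"
    by (rule cp_shift[OF assms(1)])
  then show ?thesis unfolding q in_shape_def by (simp add: algebra_simps)
qed

lemma box_mem:
  assumes "cylindric_partition k n lam" "cylindric_partition k n mu"
  shows "(cyl_box k n p \<in> skew_boxes k n lam mu) = (p \<in> skew_points lam mu)"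
proof
  assume "cyl_box k n p \<in> skew_boxes k n lam mu"
  then obtain q where q: "q \<in> skew_points lam mu" "cyl_box k n p = cyl_box k n q"
    unfolding skew_boxes_def by auto
  have "p \<in> cyl_box k n q" using q(2) in_box by metis
  then show "p \<in> skew_points lam mu" using q(1) box_shape[OF assms(1)] box_shape[OF assms(2)]
    unfolding skew_points_def by auto
qed (auto simp: skew_boxes_def)

lemma box_eq: "cyl_box k n (x + int k, y - (int n - int k)) = cyl_box k n (x, y)"
proof -
  have "cyl_box k n (x + int k, y - (int n - int k)) = {(x - (j - 1) * int k, y + (j - 1) * (int n - int k)) | j. True}"
    unfolding cyl_box_def by (simp add: algebra_simps)
  also have "\<dots> = {(x - j * int k, y + j * (int n - int k)) | j. True}"
    by (metis (no_types, opaque_lifting) add_diff_cancel)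
  finally show ?thesis unfolding cyl_box_def by simp
qed

definition strips :: "nat \<Rightarrow> nat \<Rightarrow> (int \<Rightarrow> int) \<Rightarrow> (int \<Rightarrow> int) set" where
  "strips k n mu = {nu. cylindric_partition k n nu \<and> (\<forall>m. mu m \<le> nu m) \<and> (\<forall>x. nu (x+1) \<le> mu x)}"

definition gR where
  "gR k n mu nu lam R' = (\<lambda>B. if B \<in> skew_boxes k n lam mu then (if B \<in> skew_boxes k n nu mu then 1 else R' B + 1) else (0::nat))"

definition glue where
  "glue k n mu = (\<lambda>(nu, (lam, R')). (lam, gR k n mu nu lam R'))"

lemma gR_pt:
  assumes "cylindric_partition k n mu" "cylindric_partition k n nu" "cylindric_partition k n lam"
    "\<forall>m. nu m \<le> lam m" "p \<in> skew_points lam mu"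
  shows "gR k n mu nu lam R' (cyl_box k n p) = (if p \<in> skew_points nu mu then 1 else R' (cyl_box k n p) + 1)"
  using assms box_mem[OF assms(3,1)] box_mem[OF assms(2,1)] unfolding gR_def by auto

lemma glue_in:
  assumes mu: "cylindric_partition k n mu" and nu: "nu \<in> strips k n mu"
    and T: "(lam, R') \<in> cyl_tableaux k n t nu"
  shows "glue k n mu (nu, (lam, R')) \<in> cyl_tableaux k n (Suc t) mu"
proof -
  have cnu: "cylindric_partition k n nu" and munu: "\<forall>m. mu m \<le> nu m" and strip: "\<forall>x. nu (x+1) \<le> mu x"
    using nu unfolding strips_def by auto
  have clam: "cylindric_partition k n lam" and nulam: "\<forall>m. nu m \<le> lam m"
    and R0: "\<forall>B. B \<notin> skew_boxes k n lam nu \<longrightarrow> R' B = 0"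
    and Rr: "\<forall>B\<in>skew_boxes k n lam nu. R' B \<in> {1..t}"
    and Rc: "\<forall>x y1 y2. (x, y1) \<in> skew_points lam nu \<and> (x, y2) \<in> skew_points lam nu \<and> y1 < y2
        \<longrightarrow> R' (cyl_box k n (x, y1)) \<le> R' (cyl_box k n (x, y2))"
    and Rrow: "\<forall>x1 x2 y. (x1, y) \<in> skew_points lam nu \<and> (x2, y) \<in> skew_points lam nu \<and> x1 < x2
        \<longrightarrow> R' (cyl_box k n (x1, y)) < R' (cyl_box k n (x2, y))"
    using T unfolding cyl_tableaux_def by auto
  let ?R = "gR k n mu nu lam R'"
  have pt: "\<And>p. p \<in> skew_points lam mu \<Longrightarrow> ?R (cyl_box k n p) = (if p \<in> skew_points nu mu then 1 else R' (cyl_box k n p) + 1)"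
    by (rule gR_pt[OF mu cnu clam nulam])
  have R'pos: "\<And>p. p \<in> skew_points lam nu \<Longrightarrow> R' (cyl_box k n p) \<in> {1..t}"
    using Rr box_mem[OF clam cnu] by auto
  have SPl: "\<And>x y. (x,y) \<in> skew_points lam mu \<longleftrightarrow> mu x < y \<and> y \<le> lam x"
    and SPn: "\<And>x y. (x,y) \<in> skew_points nu mu \<longleftrightarrow> mu x < y \<and> y \<le> nu x"
    and SPln: "\<And>x y. (x,y) \<in> skew_points lam nu \<longleftrightarrow> nu x < y \<and> y \<le> lam x"
    unfolding skew_points_def in_shape_def by auto
  have "\<forall>m. mu m \<le> lam m" using munu nulam by (meson order_trans)
  moreover have "\<forall>B. B \<notin> skew_boxes k n lam mu \<longrightarrow> ?R B = 0" unfolding gR_def by auto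
  moreover have "\<forall>B\<in>skew_boxes k n lam mu. ?R B \<in> {1..Suc t}"
  proof
    fix B assume "B \<in> skew_boxes k n lam mu"
    then obtain p where p: "p \<in> skew_points lam mu" "B = cyl_box k n p" unfolding skew_boxes_def by auto
    show "?R B \<in> {1..Suc t}"
    proof (cases "p \<in> skew_points nu mu")
      case True then show ?thesis using pt p by simp
    next
      case False
      then have "p \<in> skew_points lam nu" using p(1) unfolding skew_points_def in_shape_def by auto
      then show ?thesis using pt p R'pos False by fastforce
    qed
  qed
  moreover have "\<forall>x y1 y2. (x, y1) \<in> skew_points lam mu \<and> (x, y2) \<in> skew_points lam mu \<and> y1 < y2
        \<longrightarrow> ?R (cyl_box k n (x, y1)) \<le> ?R (cyl_box k n (x, y2))"
  proof (intro allI impI, elim conjE)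
    fix x y1 y2 assume a: "(x, y1) \<in> skew_points lam mu" "(x, y2) \<in> skew_points lam mu" "y1 < y2"
    show "?R (cyl_box k n (x, y1)) \<le> ?R (cyl_box k n (x, y2))"
      using pt[OF a(1)] pt[OF a(2)] a SPl SPn SPln R'pos[of "(x,y1)"] R'pos[of "(x,y2)"]
        Rc[rule_format, of x y1 y2]
      by (cases "y1 \<le> nu x"; cases "y2 \<le> nu x") auto
  qed
  moreover have "\<forall>x1 x2 y. (x1, y) \<in> skew_points lam mu \<and> (x2, y) \<in> skew_points lam mu \<and> x1 < x2
        \<longrightarrow> ?R (cyl_box k n (x1, y)) < ?R (cyl_box k n (x2, y))"
  proof (intro allI impI, elim conjE)
    fix x1 x2 y assume a: "(x1, y) \<in> skew_points lam mu" "(x2, y) \<in> skew_points lam mu" "x1 < x2"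
    have m1: "nu x2 \<le> nu (x1 + 1)" using cp_mono[OF cnu, of "x1+1" x2] a(3) by simp
    have m2: "nu x2 \<le> nu x1" using cp_mono[OF cnu, of "x1" x2] a(3) by simp
    have s: "nu (x1+1) \<le> mu x1" using strip by simp
    show "?R (cyl_box k n (x1, y)) < ?R (cyl_box k n (x2, y))"
      using pt[OF a(1)] pt[OF a(2)] a SPl SPn SPln R'pos[of "(x1,y)"] R'pos[of "(x2,y)"]
        Rrow[rule_format, of x1 y x2] m1 m2 s
      by (cases "y \<le> nu x1"; cases "y \<le> nu x2") auto
  qed
  ultimately show ?thesis using clam unfolding glue_def cyl_tableaux_def by auto
qed


lemma uniq_cut:
  fixes a b m :: int
  assumes "m \<le> a" "m \<le> b" "\<And>y. m < y \<Longrightarrow> (y \<le> a) = (y \<le> b)"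
  shows "a = b"
  using assms(3)[of "max a b"] assms(1,2) by (cases "m < max a b") auto

lemma glue_char:
  assumes mu: "cylindric_partition k n mu" and nu: "nu \<in> strips k n mu"
    and T: "(lam, R') \<in> cyl_tableaux k n t nu" and y: "mu x < y"
  shows "(y \<le> nu x) = (y \<le> lam x \<and> gR k n mu nu lam R' (cyl_box k n (x,y)) = 1)"
proof -
  have cnu: "cylindric_partition k n nu" and munu: "\<forall>m. mu m \<le> nu m"
    using nu unfolding strips_def by auto
  have clam: "cylindric_partition k n lam" and nulam: "\<forall>m. nu m \<le> lam m"
    and Rr: "\<forall>B\<in>skew_boxes k n lam nu. R' B \<in> {1..t}"
    using T unfolding cyl_tableaux_def by auto
  have R'pos: "\<And>p. p \<in> skew_points lam nu \<Longrightarrow> R' (cyl_box k n p) \<in> {1..t}"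
    using Rr box_mem[OF clam cnu] by auto
  show ?thesis
  proof (cases "y \<le> lam x")
    case True
    then have "(x,y) \<in> skew_points lam mu" using y unfolding skew_points_def in_shape_def by auto
    note g = gR_pt[OF mu cnu clam nulam this, of R']
    show ?thesis
    proof (cases "y \<le> nu x")
      case True then show ?thesis using g y nulam \<open>y \<le> lam x\<close> unfolding skew_points_def in_shape_def by auto
    next
      case False
      then have "(x,y) \<in> skew_points lam nu" using \<open>y \<le> lam x\<close> unfolding skew_points_def in_shape_def by auto
      then show ?thesis using g R'pos[of "(x,y)"] False unfolding skew_points_def in_shape_def by auto
    qed
  next
    case False then show ?thesis using nulam by (meson order_trans)
  qed
qed

lemma glue_inj:
  assumes mu: "cylindric_partition k n mu"
  shows "inj_on (glue k n mu) (Sigma (strips k n mu) (\<lambda>nu. cyl_tableaux k n t nu))"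
proof (rule inj_onI, clarsimp)
  fix nu1 lam1 R1 nu2 lam2 R2
  assume n1: "nu1 \<in> strips k n mu" and T1: "(lam1, R1) \<in> cyl_tableaux k n t nu1"
    and n2: "nu2 \<in> strips k n mu" and T2: "(lam2, R2) \<in> cyl_tableaux k n t nu2"
    and eq: "glue k n mu (nu1, lam1, R1) = glue k n mu (nu2, lam2, R2)"
  have l: "lam1 = lam2" and g: "gR k n mu nu1 lam1 R1 = gR k n mu nu2 lam2 R2"
    using eq unfolding glue_def by auto
  have nueq: "nu1 = nu2"
  proof
    fix x
    show "nu1 x = nu2 x"
    proof (rule uniq_cut[of "mu x"])
      show "mu x \<le> nu1 x" "mu x \<le> nu2 x" using n1 n2 unfolding strips_def by auto
      fix y assume "mu x < y"
      then show "(y \<le> nu1 x) = (y \<le> nu2 x)"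
        using glue_char[OF mu n1 T1, of x y] glue_char[OF mu n2 T2, of x y] l g by simp
    qed
  qed
  have cnu: "cylindric_partition k n nu1" using n1 unfolding strips_def by auto
  have clam: "cylindric_partition k n lam1" and nulam: "\<forall>m. nu1 m \<le> lam1 m"
    and R10: "\<forall>B. B \<notin> skew_boxes k n lam1 nu1 \<longrightarrow> R1 B = 0"
    using T1 unfolding cyl_tableaux_def by auto
  have R20: "\<forall>B. B \<notin> skew_boxes k n lam1 nu1 \<longrightarrow> R2 B = 0"
    using T2 l nueq unfolding cyl_tableaux_def by auto
  have "R1 = R2"
  proof
    fix B
    show "R1 B = R2 B"
    proof (cases "B \<in> skew_boxes k n lam1 nu1")
      case True
      then obtain p where p: "p \<in> skew_points lam1 nu1" "B = cyl_box k n p"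
        unfolding skew_boxes_def by auto
      have pm: "p \<in> skew_points lam1 mu" "p \<notin> skew_points nu1 mu"
        using p(1) n1 unfolding strips_def skew_points_def in_shape_def
        by (auto, meson order_trans)
      show ?thesis
        using gR_pt[OF mu cnu clam nulam pm(1), of R1] gR_pt[OF mu cnu clam nulam pm(1), of R2]
          pm(2) g l nueq p(2) by simp
    qed (use R10 R20 in auto)
  qed
  then show "nu1 = nu2 \<and> lam1 = lam2 \<and> R1 = R2" using nueq l by simp
qed


lemma glue_surj:
  assumes mu: "cylindric_partition k n mu" and T: "(lam, R) \<in> cyl_tableaux k n (Suc t) mu"
  shows "(lam, R) \<in> glue k n mu ` (Sigma (strips k n mu) (\<lambda>nu. cyl_tableaux k n t nu))"
proof -
  have clam: "cylindric_partition k n lam" and mulam: "\<forall>m. mu m \<le> lam m"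
    and R0: "\<forall>B. B \<notin> skew_boxes k n lam mu \<longrightarrow> R B = 0"
    and Rr: "\<forall>B\<in>skew_boxes k n lam mu. R B \<in> {1..Suc t}"
    and Rc: "\<forall>x y1 y2. (x, y1) \<in> skew_points lam mu \<and> (x, y2) \<in> skew_points lam mu \<and> y1 < y2
        \<longrightarrow> R (cyl_box k n (x, y1)) \<le> R (cyl_box k n (x, y2))"
    and Rrow: "\<forall>x1 x2 y. (x1, y) \<in> skew_points lam mu \<and> (x2, y) \<in> skew_points lam mu \<and> x1 < x2
        \<longrightarrow> R (cyl_box k n (x1, y)) < R (cyl_box k n (x2, y))"
    using T unfolding cyl_tableaux_def by auto
  have Rpos: "\<And>p. p \<in> skew_points lam mu \<Longrightarrow> R (cyl_box k n p) \<in> {1..Suc t}"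
    using Rr box_mem[OF clam mu] by auto
  have SPl: "\<And>x y. (x,y) \<in> skew_points lam mu \<longleftrightarrow> mu x < y \<and> y \<le> lam x"
    unfolding skew_points_def in_shape_def by auto
  define S where "S x = {y. mu x < y \<and> y \<le> lam x \<and> R (cyl_box k n (x,y)) = 1}" for x
  define nu where "nu x = Max (insert (mu x) (S x))" for x
  have finS: "finite (S x)" for x
    by (rule finite_subset[of _ "{mu x..lam x}"]) (auto simp: S_def)
  have nuge: "mu x \<le> nu x" for x unfolding nu_def using finS by simp
  have nuin: "nu x \<in> insert (mu x) (S x)" for x unfolding nu_def using finS by (intro Max_in) auto
  have char: "(y \<le> nu x) = (y \<le> lam x \<and> R (cyl_box k n (x,y)) = 1)" if y: "mu x < y" for x y
  proof
    assume "y \<le> lam x \<and> R (cyl_box k n (x, y)) = 1"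
    then have "y \<in> S x" using y S_def by auto
    then show "y \<le> nu x" unfolding nu_def using finS by simp
  next
    assume a: "y \<le> nu x"
    then have "nu x \<in> S x" using nuin[of x] y by auto
    then have n: "mu x < nu x" "nu x \<le> lam x" "R (cyl_box k n (x, nu x)) = 1" unfolding S_def by auto
    have yl: "y \<le> lam x" using a n by simp
    have "R (cyl_box k n (x, y)) \<le> 1"
    proof (cases "y < nu x")
      case True
      then show ?thesis using Rc[rule_format, of x y "nu x"] SPl n y yl by auto
    next
      case False then show ?thesis using a n by simp
    qed
    moreover have "R (cyl_box k n (x, y)) \<ge> 1" using Rpos[of "(x,y)"] SPl y yl by auto
    ultimately show "y \<le> lam x \<and> R (cyl_box k n (x, y)) = 1" using yl by simp
  qed
  have nulam: "nu x \<le> lam x" for x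
    using nuin[of x] mulam unfolding S_def by auto
  have strip: "nu (x+1) \<le> mu x" for x
  proof (rule ccontr)
    assume c: "\<not> nu (x+1) \<le> mu x"
    have m1: "mu (x+1) \<le> mu x" using mu unfolding cylindric_partition_def by blast
    have l1: "lam (x+1) \<le> lam x" using clam unfolding cylindric_partition_def by blast
    let ?y = "nu (x+1)"
    have "R (cyl_box k n (x+1, ?y)) = 1" "?y \<le> lam (x+1)"
      using char[of "x+1" ?y] c m1 by auto
    moreover have "(x, ?y) \<in> skew_points lam mu" "(x+1, ?y) \<in> skew_points lam mu"
      using SPl c m1 l1 calculation(2) by auto
    ultimately show False using Rrow[rule_format, of x ?y "x+1"] Rpos[of "(x,?y)"] by auto
  qed
  have cnu: "cylindric_partition k n nu"
    unfolding cylindric_partition_def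
  proof (intro conjI allI)
    fix m show "nu (m+1) \<le> nu m" using strip[of m] nuge[of m] by simp
  next
    fix x
    have mp: "mu x = mu (x + int k) + (int n - int k)" using mu unfolding cylindric_partition_def by blast
    have lp: "lam x = lam (x + int k) + (int n - int k)" using clam unfolding cylindric_partition_def by blast
    show "nu x = nu (x + int k) + (int n - int k)"
    proof (rule uniq_cut[of "mu x"])
      show "mu x \<le> nu x" by (rule nuge)
      show "mu x \<le> nu (x + int k) + (int n - int k)" using nuge[of "x + int k"] mp by simp
      fix y assume y: "mu x < y"
      have "(y \<le> nu (x + int k) + (int n - int k)) = (y - (int n - int k) \<le> nu (x + int k))" by linarith
      also have "\<dots> = (y - (int n - int k) \<le> lam (x + int k) \<and> R (cyl_box k n (x + int k, y - (int n - int k))) = 1)"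
        using char[of "x + int k" "y - (int n - int k)"] y mp by simp
      also have "\<dots> = (y \<le> lam x \<and> R (cyl_box k n (x, y)) = 1)"
      proof -
        have "(y - (int n - int k) \<le> lam (x + int k)) = (y \<le> lam x)" using lp by linarith
        then show ?thesis using box_eq[of k n x y] by simp
      qed
      also have "\<dots> = (y \<le> nu x)" using char[OF y] by simp
      finally show "(y \<le> nu x) = (y \<le> nu (x + int k) + (int n - int k))" by simp
    qed
  qed
  have nus: "nu \<in> strips k n mu" unfolding strips_def using cnu nuge strip by auto
  define R' where "R' B = (if B \<in> skew_boxes k n lam nu then R B - 1 else 0)" for B
  have SPln: "\<And>x y. (x,y) \<in> skew_points lam nu \<longleftrightarrow> nu x < y \<and> y \<le> lam x"
    unfolding skew_points_def in_shape_def by auto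
  have R'pt: "R' (cyl_box k n p) = R (cyl_box k n p) - 1 \<and> R (cyl_box k n p) \<in> {2..Suc t}"
    if p: "p \<in> skew_points lam nu" for p
  proof -
    obtain x y where xy: "p = (x,y)" by (cases p)
    have a: "nu x < y" "y \<le> lam x" using p SPln xy by auto
    then have "mu x < y" using nuge[of x] by simp
    then have "R (cyl_box k n p) \<noteq> 1" "R (cyl_box k n p) \<in> {1..Suc t}"
      using char[of x y] a xy Rpos[of p] SPl by auto
    then show ?thesis using p box_mem[OF clam cnu] R'_def by auto
  qed
  have TT: "(lam, R') \<in> cyl_tableaux k n t nu"
    unfolding cyl_tableaux_def
  proof (clarsimp, intro conjI)
    show "cylindric_partition k n lam" by (rule clam)
    show "\<forall>m. nu m \<le> lam m" using nulam by simp
    show "\<forall>B. B \<notin> skew_boxes k n lam nu \<longrightarrow> R' B = 0" unfolding R'_def by simp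
    show "\<forall>B\<in>skew_boxes k n lam nu. Suc 0 \<le> R' B \<and> R' B \<le> t"
    proof
      fix B assume "B \<in> skew_boxes k n lam nu"
      then obtain p where "p \<in> skew_points lam nu" "B = cyl_box k n p" unfolding skew_boxes_def by auto
      then show "Suc 0 \<le> R' B \<and> R' B \<le> t" using R'pt[of p] by auto
    qed
    show "\<forall>x y1 y2. (x, y1) \<in> skew_points lam nu \<and> (x, y2) \<in> skew_points lam nu \<and> y1 < y2 \<longrightarrow>
        R' (cyl_box k n (x, y1)) \<le> R' (cyl_box k n (x, y2))"
    proof (intro allI impI, elim conjE)
      fix x y1 y2 assume a: "(x, y1) \<in> skew_points lam nu" "(x, y2) \<in> skew_points lam nu" "y1 < y2"
      then have "(x, y1) \<in> skew_points lam mu" "(x, y2) \<in> skew_points lam mu"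
        using SPln SPl nuge[of x] by auto
      then show "R' (cyl_box k n (x, y1)) \<le> R' (cyl_box k n (x, y2))"
        using Rc[rule_format, of x y1 y2] R'pt[OF a(1)] R'pt[OF a(2)] a(3) by auto
    qed
    show "\<forall>x1 x2 y. (x1, y) \<in> skew_points lam nu \<and> (x2, y) \<in> skew_points lam nu \<and> x1 < x2 \<longrightarrow>
        R' (cyl_box k n (x1, y)) < R' (cyl_box k n (x2, y))"
    proof (intro allI impI, elim conjE)
      fix x1 x2 y assume a: "(x1, y) \<in> skew_points lam nu" "(x2, y) \<in> skew_points lam nu" "x1 < x2"
      then have "(x1, y) \<in> skew_points lam mu" "(x2, y) \<in> skew_points lam mu"
        using SPln SPl nuge[of x1] nuge[of x2] by auto
      then show "R' (cyl_box k n (x1, y)) < R' (cyl_box k n (x2, y))"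
        using Rrow[rule_format, of x1 y x2] R'pt[OF a(1)] R'pt[OF a(2)] a(3) by auto
    qed
  qed
  have "gR k n mu nu lam R' = R"
  proof
    fix B
    show "gR k n mu nu lam R' B = R B"
    proof (cases "B \<in> skew_boxes k n lam mu")
      case True
      then obtain p where p: "p \<in> skew_points lam mu" "B = cyl_box k n p" unfolding skew_boxes_def by auto
      obtain x y where xy: "p = (x,y)" by (cases p)
      have g: "gR k n mu nu lam R' B = (if p \<in> skew_points nu mu then 1 else R' B + 1)"
        using gR_pt[OF mu cnu clam _ p(1), of R'] nulam p(2) by simp
      show ?thesis
      proof (cases "p \<in> skew_points nu mu")
        case True
        then have "mu x < y" "y \<le> nu x" using xy unfolding skew_points_def in_shape_def by auto
        then show ?thesis using g True char[of x y] xy p(2) by simp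
      next
        case False
        then have "p \<in> skew_points lam nu" using p(1) unfolding skew_points_def by auto
        then show ?thesis using g False R'pt[of p] p(2) by auto
      qed
    next
      case False then show ?thesis using R0 unfolding gR_def by simp
    qed
  qed
  then have "glue k n mu (nu, (lam, R')) = (lam, R)" unfolding glue_def by simp
  then show ?thesis using nus TT by force
qed

lemma glue_bij:
  assumes mu: "cylindric_partition k n mu"
  shows "bij_betw (glue k n mu) (Sigma (strips k n mu) (\<lambda>nu. cyl_tableaux k n t nu)) (cyl_tableaux k n (Suc t) mu)"
  unfolding bij_betw_def
proof (intro conjI glue_inj[OF mu] equalityI subsetI)
  fix z assume "z \<in> glue k n mu ` (Sigma (strips k n mu) (\<lambda>nu. cyl_tableaux k n t nu))"
  then show "z \<in> cyl_tableaux k n (Suc t) mu" using glue_in[OF mu] by auto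
next
  fix z assume "z \<in> cyl_tableaux k n (Suc t) mu"
  then show "z \<in> glue k n mu ` (Sigma (strips k n mu) (\<lambda>nu. cyl_tableaux k n t nu))"
    using glue_surj[OF mu] by (cases z) auto
qed


definition Vt :: "nat \<Rightarrow> (int \<Rightarrow> int) \<Rightarrow> (nat \<Rightarrow> nat) set" where
  "Vt k mu = {a. (\<forall>i<k. a i \<le> Arr k mu i) \<and> (\<forall>i\<ge>k. a i = 0)}"

definition addv :: "nat \<Rightarrow> (int \<Rightarrow> int) \<Rightarrow> (nat \<Rightarrow> nat) \<Rightarrow> int \<Rightarrow> int" where
  "addv k mu a = (\<lambda>x. mu x + int (a (nat (x mod int k))))"

lemma diff_period:
  assumes "cylindric_partition k n mu"
  shows "mu (x + q * int k) - mu (x + q * int k + 1) = mu x - mu (x + 1)"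
  using cp_shift[OF assms, of x q] cp_shift[OF assms, of "x+1" q] by (simp add: algebra_simps)

lemma diff_nonneg:
  assumes "cylindric_partition k n mu"
  shows "mu (x+1) \<le> mu x"
  using assms unfolding cylindric_partition_def by blast

lemma addv_strip:
  assumes mu: "cylindric_partition k n mu" and k: "1 \<le> k" and a: "a \<in> Vt k mu"
  shows "addv k mu a \<in> strips k n mu"
proof -
  let ?nu = "addv k mu a"
  have kk: "int k > 0" using k by simp
  have s: "?nu (x+1) \<le> mu x" for x
  proof -
    define j where "j = (x+1) mod int k"
    define q where "q = (x+1) div int k"
    have j: "0 \<le> j" "j < int k" "x + 1 = j + q * int k" using kk unfolding j_def q_def by auto
    have jn: "nat j < k" using j by simp
    have "a (nat j) \<le> Arr k mu (nat j)" using a jn unfolding Vt_def by auto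
    also have "\<dots> = nat (mu (j - 1) - mu j)" unfolding Arr_def using jn j by simp
    finally have "int (a (nat j)) \<le> mu (j - 1) - mu j"
      using diff_nonneg[OF mu, of "j-1"] by simp
    moreover have "mu (j - 1 + q * int k) - mu (j - 1 + q * int k + 1) = mu (j-1) - mu (j - 1 + 1)"
      by (rule diff_period[OF mu])
    moreover have "mu x = mu (j - 1 + q * int k)" using j(3) by (intro arg_cong[where f=mu]) linarith
    moreover have "mu (x + 1) = mu (j + q * int k)" using j(3) by simp
    moreover have "mu (j - 1 + q * int k + 1) = mu (j + q * int k)" by (simp add: algebra_simps)
    ultimately show ?thesis unfolding addv_def j_def[symmetric] by simp
  qed
  have ge: "mu x \<le> ?nu x" for x unfolding addv_def by simp
  have per: "?nu x = ?nu (x + int k) + (int n - int k)" for x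
  proof -
    have "(x + int k) mod int k = x mod int k" by simp
    moreover have "mu x = mu (x + int k) + (int n - int k)" using mu unfolding cylindric_partition_def by blast
    ultimately show ?thesis unfolding addv_def by simp
  qed
  have dec: "?nu (x+1) \<le> ?nu x" for x using s[of x] ge[of x] by linarith
  have "cylindric_partition k n ?nu" unfolding cylindric_partition_def
    using dec per by blast
  then show ?thesis unfolding strips_def using s ge by blast
qed

lemma addv_turn:
  assumes mu: "cylindric_partition k n mu" and k: "1 \<le> k" and a: "a \<in> Vt k mu"
  shows "turn_step k (Arr k mu) a = Arr k (addv k mu a)"
proof
  fix i
  show "turn_step k (Arr k mu) a i = Arr k (addv k mu a) i"
  proof (cases "i < k")
    case True
    have m: "nat ((int i - 1) mod int k) = (i + k - 1) mod k"
    proof (cases i)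
      case 0 then show ?thesis using k
        by (simp add: zmod_minus1 nat_diff_distrib)
    next
      case (Suc i') then show ?thesis using True
        by (simp add: of_nat_mod[symmetric] del: of_nat_mod)
    qed
    have im: "nat (int i mod int k) = i" using True by (simp add: of_nat_mod[symmetric] del: of_nat_mod)
    have ai: "a i \<le> nat (mu (int i - 1) - mu (int i))" using a True unfolding Vt_def Arr_def by auto
    have "0 \<le> mu (int i - 1) - mu (int i)" using diff_nonneg[OF mu, of "int i - 1"] by simp
    then show ?thesis using True ai unfolding turn_step_def Arr_def addv_def m im
      by simp
  next
    case False then show ?thesis unfolding turn_step_def Arr_def by simp
  qed
qed


lemma bij_Sigma:
  assumes "bij_betw h I J" "\<And>i. i \<in> I \<Longrightarrow> bij_betw (f i) (X i) (Y (h i))"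
  shows "bij_betw (\<lambda>(i,x). (h i, f i x)) (Sigma I X) (Sigma J Y)"
  unfolding bij_betw_def
proof (intro conjI inj_onI equalityI subsetI)
  fix u v assume u: "u \<in> Sigma I X" and v: "v \<in> Sigma I X"
    and e: "(\<lambda>(i,x). (h i, f i x)) u = (\<lambda>(i,x). (h i, f i x)) v"
  obtain i x j y where uv: "u = (i,x)" "v = (j,y)" by (cases u, cases v)
  have "h i = h j" using e uv by simp
  then have ij: "i = j" using assms(1) u v uv unfolding bij_betw_def inj_on_def by auto
  then have "f i x = f i y" using e uv by simp
  then show "u = v" using assms(2)[of i] u v uv ij unfolding bij_betw_def inj_on_def by auto
next
  fix z assume "z \<in> (\<lambda>(i,x). (h i, f i x)) ` Sigma I X"
  then show "z \<in> Sigma J Y" using assms unfolding bij_betw_def by auto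
next
  fix z assume z: "z \<in> Sigma J Y"
  obtain j y where zz: "z = (j,y)" by (cases z)
  obtain i where i: "i \<in> I" "j = h i" using z zz assms(1) unfolding bij_betw_def by auto
  obtain x where "x \<in> X i" "y = f i x" using assms(2)[OF i(1)] z zz i unfolding bij_betw_def by auto
  then show "z \<in> (\<lambda>(i,x). (h i, f i x)) ` Sigma I X" using zz i by force
qed

lemma addv_bij:
  assumes mu: "cylindric_partition k n mu" and k: "1 \<le> k"
  shows "bij_betw (addv k mu) (Vt k mu) (strips k n mu)"
  unfolding bij_betw_def
proof (intro conjI inj_onI equalityI subsetI)
  fix a b assume a: "a \<in> Vt k mu" and b: "b \<in> Vt k mu" and e: "addv k mu a = addv k mu b"
  show "a = b"
  proof
    fix i
    show "a i = b i"
    proof (cases "i < k")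
      case True
      have "nat (int i mod int k) = i" using True by (simp add: of_nat_mod[symmetric] del: of_nat_mod)
      then show ?thesis using fun_cong[OF e, of "int i"] unfolding addv_def by simp
    next
      case False then show ?thesis using a b unfolding Vt_def by auto
    qed
  qed
next
  fix z assume "z \<in> addv k mu ` Vt k mu" then show "z \<in> strips k n mu" using addv_strip[OF mu k] by auto
next
  fix nu assume nu: "nu \<in> strips k n mu"
  have cnu: "cylindric_partition k n nu" and ge: "\<forall>m. mu m \<le> nu m" and s: "\<forall>x. nu (x+1) \<le> mu x"
    using nu unfolding strips_def by auto
  define a where "a i = (if i < k then nat (nu (int i) - mu (int i)) else 0)" for i
  have kk: "int k > 0" using k by simp
  have "a \<in> Vt k mu" unfolding Vt_def
  proof (intro CollectI conjI allI impI)
    fix i assume i: "i < k"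
    have "nu (int i - 1 + 1) \<le> mu (int i - 1)" using s by blast
    then show "a i \<le> Arr k mu i" unfolding a_def Arr_def using i by auto
  qed (simp add: a_def)
  moreover have "addv k mu a = nu"
  proof
    fix x
    define j where "j = x mod int k"
    define q where "q = x div int k"
    have j: "0 \<le> j" "j < int k" "x = j + q * int k" using kk unfolding j_def q_def by auto
    have "nu x = nu j - q * (int n - int k)" "mu x = mu j - q * (int n - int k)"
      using cp_shift[OF cnu, of j q] cp_shift[OF mu, of j q] j(3) by auto
    moreover have "a (nat j) = nat (nu j - mu j)" using j unfolding a_def by simp
    ultimately show "addv k mu a x = nu x" unfolding addv_def j_def[symmetric]
      using ge[rule_format, of j] by simp
  qed
  ultimately show "nu \<in> addv k mu ` Vt k mu" by blast
qed

lemma games_bij: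
  assumes mu: "cylindric_partition k n mu" and k: "1 \<le> k"
  shows "bij_betw (\<lambda>(a,(B,ts)). (Arr k mu, a # ts))
     (Sigma (Vt k mu) (\<lambda>a. marble_games k (Arr k (addv k mu a)) t))
     (marble_games k (Arr k mu) (Suc t))"
  unfolding bij_betw_def
proof (intro conjI inj_onI equalityI subsetI)
  fix u v assume "u \<in> Sigma (Vt k mu) (\<lambda>a. marble_games k (Arr k (addv k mu a)) t)"
    "v \<in> Sigma (Vt k mu) (\<lambda>a. marble_games k (Arr k (addv k mu a)) t)"
    "(\<lambda>(a,(B,ts)). (Arr k mu, a # ts)) u = (\<lambda>(a,(B,ts)). (Arr k mu, a # ts)) v"
  then show "u = v" unfolding marble_games_def by auto
next
  fix z assume "z \<in> (\<lambda>(a,(B,ts)). (Arr k mu, a # ts)) ` Sigma (Vt k mu) (\<lambda>a. marble_games k (Arr k (addv k mu a)) t)"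
  then obtain a ts where z: "z = (Arr k mu, a # ts)" "a \<in> Vt k mu" "length ts = t"
     "valid_turns k (Arr k (addv k mu a)) ts"
    unfolding marble_games_def by auto
  then show "z \<in> marble_games k (Arr k mu) (Suc t)"
    using addv_turn[OF mu k z(2)] unfolding marble_games_def Vt_def by auto
next
  fix z assume "z \<in> marble_games k (Arr k mu) (Suc t)"
  then obtain a ts where z: "z = (Arr k mu, a # ts)" "length ts = t"
    "valid_turns k (Arr k mu) (a # ts)"
    unfolding marble_games_def by (auto simp: length_Suc_conv)
  then have av: "a \<in> Vt k mu" and vt: "valid_turns k (turn_step k (Arr k mu) a) ts"
    unfolding Vt_def by auto
  then have "(Arr k (addv k mu a), ts) \<in> marble_games k (Arr k (addv k mu a)) t"
    using addv_turn[OF mu k av] z(2) unfolding marble_games_def by simp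
  then show "z \<in> (\<lambda>(a,(B,ts)). (Arr k mu, a # ts)) ` Sigma (Vt k mu) (\<lambda>a. marble_games k (Arr k (addv k mu a)) t)"
    using av z(1) by force
qed

lemma base_case:
  assumes mu: "cylindric_partition k n mu"
  shows "\<exists>f. bij_betw f (marble_games k (Arr k mu) 0) (cyl_tableaux k n 0 mu)"
proof -
  have G: "marble_games k (Arr k mu) 0 = {(Arr k mu, [])}" unfolding marble_games_def by auto
  have T: "cyl_tableaux k n 0 mu = {(mu, \<lambda>_. 0)}"
  proof (intro equalityI subsetI)
    fix z assume z: "z \<in> cyl_tableaux k n 0 mu"
    obtain lam R where zz: "z = (lam, R)" by (cases z)
    have clam: "cylindric_partition k n lam" and ml: "\<forall>m. mu m \<le> lam m"
      and R0: "\<forall>B. B \<notin> skew_boxes k n lam mu \<longrightarrow> R B = 0"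
      and Rr: "\<forall>B\<in>skew_boxes k n lam mu. R B \<in> {1..0}"
      using z zz unfolding cyl_tableaux_def by auto
    have e: "skew_boxes k n lam mu = {}" using Rr by auto
    have "lam = mu"
    proof
      fix x
      show "lam x = mu x"
      proof (rule ccontr)
        assume "lam x \<noteq> mu x"
        then have "mu x < lam x" using ml[rule_format, of x] by linarith
        then have "(x, lam x) \<in> skew_points lam mu" unfolding skew_points_def in_shape_def
          by auto
        then show False using e unfolding skew_boxes_def by auto
      qed
    qed
    moreover have "R = (\<lambda>_. 0)" using R0 e by auto
    ultimately show "z \<in> {(mu, \<lambda>_. 0)}" using zz by simp
  next
    fix z assume "z \<in> {(mu, \<lambda>_::(int \<times> int) set. 0::nat)}"
    moreover have "skew_points mu mu = {}" unfolding skew_points_def by auto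
    ultimately show "z \<in> cyl_tableaux k n 0 mu" using mu unfolding cyl_tableaux_def skew_boxes_def by auto
  qed
  show ?thesis unfolding G T by (intro exI[of _ "\<lambda>_. (mu, \<lambda>_. 0)"]) (simp add: bij_betw_def)
qed

theorem mainTheorem8:
  fixes k n t :: nat and mu :: "int \<Rightarrow> int"
  assumes "1 \<le> k" and "k < n" and "cylindric_partition k n mu"
  shows "\<exists>f. bij_betw f (marble_games k (Arr k mu) t) (cyl_tableaux k n t mu)"
  using assms(3)
proof (induct t arbitrary: mu)
  case 0 then show ?case by (rule base_case)
next
  case (Suc t)
  have "\<forall>mu. \<exists>f. cylindric_partition k n mu \<longrightarrow> bij_betw f (marble_games k (Arr k mu) t) (cyl_tableaux k n t mu)"
    using Suc(1) by blast
  then obtain F where F: "\<And>mu. cylindric_partition k n mu \<Longrightarrow> bij_betw (F mu) (marble_games k (Arr k mu) t) (cyl_tableaux k n t mu)"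
    by metis
  note mu = Suc(2)
  let ?SG = "Sigma (Vt k mu) (\<lambda>a. marble_games k (Arr k (addv k mu a)) t)"
  let ?gG = "\<lambda>(a,(B,ts)). (Arr k mu, a # ts)"
  have b1: "bij_betw (inv_into ?SG ?gG) (marble_games k (Arr k mu) (Suc t)) ?SG"
    by (rule bij_betw_inv_into[OF games_bij[OF mu assms(1)]])
  have b2: "bij_betw (\<lambda>(a,x). (addv k mu a, F (addv k mu a) x)) ?SG
     (Sigma (strips k n mu) (\<lambda>nu. cyl_tableaux k n t nu))"
  proof (rule bij_Sigma[OF addv_bij[OF mu assms(1)]])
    fix a assume "a \<in> Vt k mu"
    then have "addv k mu a \<in> strips k n mu" by (rule addv_strip[OF mu assms(1)])
    then show "bij_betw (F (addv k mu a)) (marble_games k (Arr k (addv k mu a)) t) (cyl_tableaux k n t (addv k mu a))"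
      using F unfolding strips_def by auto
  qed
  note b3 = glue_bij[OF mu, of t]
  show ?case using bij_betw_trans[OF bij_betw_trans[OF b1 b2] b3] by blast
qed

end
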